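(* Let $1\le l,m\le n$ with $l+m>n$, and set $s=l+m-n$, $r=n-l+1$. Let $a=(a_{ij})$ be an $m\times n$ matrix, $b=(b_{ij})$ an $n\times l$ matrix, and $c=ab$ (an $m\times l$ matrix), over a commutative ring containing $\mathbb Q$. Then $$\det\big(a_{ij}\big)_{1\le i,j\le m}\cdot\det\big(b_{ij}\big)_{r\le i\le n,\,1\le j\le l}=\frac{1}{s!}\sum_{\sigma\in S_m}\sum_{\tau\in S_l}\operatorname{sgn}(\sigma)\operatorname{sgn}(\tau)\prod_{k=1}^{r-1}a_{\sigma(k),k}\prod_{t=1}^{l-s}b_{m+t,\tau(s+t)}\prod_{u=1}^{s}c_{\sigma(r-1+u),\tau(u)}.$$ In particular, for $W=lV\oplus mV^*$, the product of the left minor of order $m$ of $\overline{V^*}$ (columns $1,\dots,m$) and the lower minor of order $l$ of $\overline V$ (rows $r,\dots,n$) is expressed as a polynomial in left minors of order $m-s$ of $\overline{V^*}$, lower minors of order $l-s$ of $\overline V$, and entries of $\overline{V^*}\,\overline V$.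
   Context: $S_m$ is the symmetric group on $\{1,\dots,m\}$. $\overline V$ is the $n\times l$ matrix of coordinate functions on $lV$, $\overline{V^*}$ the $m\times n$ matrix of coordinate functions on $mV^*$ (with $a=\overline{V^*}$, $b=\overline V$ in the application). A left minor uses the first columns, a lower minor uses the last rows. *)

theory Defs
  imports "HOL-Combinatorics.Permutations"
begin

text \<open>Matrices are functions nat => nat => 'a, indexed from 1.
  Leibniz determinant of the k x k matrix (M i j) with 1 <= i,j <= k.\<close>
definition det_fn :: "nat \<Rightarrow> (nat \<Rightarrow> nat \<Rightarrow> 'a::comm_ring_1) \<Rightarrow> 'a" where
  "det_fn k M = (\<Sum>p | p permutes {1..k}. of_int (sign p) * (\<Prod>i\<in>{1..k}. M i (p i)))"

definition mat_prod_fn :: "nat \<Rightarrow> (nat \<Rightarrow> nat \<Rightarrow> 'a::comm_ring_1) \<Rightarrow> (nat \<Rightarrow> nat \<Rightarrow> 'a) \<Rightarrow> nat \<Rightarrow> nat \<Rightarrow> 'a" where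
  "mat_prod_fn n a b i j = (\<Sum>k\<in>{1..n}. a i k * b k j)"

end

theory Submission
  imports Defs
begin

lemma alt_zero:
  fixes f :: "'b \<Rightarrow> 'c \<Rightarrow> 'a::comm_ring_1"
  assumes fin: "finite S" and two: "\<exists>y::'a. 2*y = 1"
    and ij: "i\<in>S" "j\<in>S" "i\<noteq>j" "col i = col j"
  shows "(\<Sum>\<sigma> | \<sigma> permutes S. of_int (sign \<sigma>) * (\<Prod>k\<in>S. f (\<sigma> k) (col k))) = 0"
proof -
  let ?t = "transpose i j"
  let ?F = "\<lambda>\<sigma>. of_int (sign \<sigma>) * (\<Prod>k\<in>S. f (\<sigma> k) (col k)) :: 'a"
  have tp: "?t permutes S" using ij by (simp add: permutes_swap_id)
  have "sum ?F {\<sigma>. \<sigma> permutes S} = sum (\<lambda>\<sigma>. ?F (\<sigma> \<circ> ?t)) {\<sigma>. \<sigma> permutes S}"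
    by (rule sum_permutations_compose_right[OF tp])
  also have "\<dots> = sum (\<lambda>\<sigma>. - ?F \<sigma>) {\<sigma>. \<sigma> permutes S}"
  proof (rule sum.cong, simp)
    fix \<sigma> assume "\<sigma> \<in> {\<sigma>. \<sigma> permutes S}"
    hence sp: "\<sigma> permutes S" by simp
    have "sign (\<sigma> \<circ> ?t) = sign \<sigma> * sign ?t"
      by (rule sign_compose[OF permutes_imp_permutation[OF fin sp] permutation_swap_id])
    hence s1: "sign (\<sigma> \<circ> ?t) = - sign \<sigma>"
      using ij(3) by (simp add: sign_swap_id)
    have "(\<Prod>k\<in>S. f (\<sigma> k) (col k)) = (\<Prod>k\<in>S. f (\<sigma> (?t k)) (col (?t k)))"
      using prod.permute[OF tp, of "\<lambda>k. f (\<sigma> k) (col k)"] unfolding comp_def .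
    also have "\<dots> = (\<Prod>k\<in>S. f (\<sigma> (?t k)) (col k))"
      using ij(4) by (intro prod.cong) (auto simp: transpose_def)
    finally show "?F (\<sigma> \<circ> ?t) = - ?F \<sigma>" using s1 by simp
  qed
  also have "\<dots> = - sum ?F {\<sigma>. \<sigma> permutes S}" by (simp add: sum_negf)
  finally have e: "sum ?F {\<sigma>. \<sigma> permutes S} = - sum ?F {\<sigma>. \<sigma> permutes S}" .
  obtain y :: 'a where y: "2*y = 1" using two by blast
  define X where "X = sum ?F {\<sigma>. \<sigma> permutes S}"
  have eX: "X = - X" using e unfolding X_def .
  have X0: "X + X = 0" using eX by (metis add.left_inverse)
  have "X = (2*y) * X" using y by simp
  also have "\<dots> = y * (X + X)" by (simp add: algebra_simps mult_2)
  also have "\<dots> = 0" using X0 by simp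
  finally show ?thesis unfolding X_def .
qed

lemma col_perm:
  fixes f :: "'b \<Rightarrow> 'b \<Rightarrow> 'a::comm_ring_1"
  assumes fin: "finite S" and pp: "\<pi> permutes S"
  shows "(\<Sum>\<sigma> | \<sigma> permutes S. of_int (sign \<sigma>) * (\<Prod>k\<in>S. f (\<sigma> k) (\<pi> k)))
       = of_int (sign \<pi>) * (\<Sum>\<sigma> | \<sigma> permutes S. of_int (sign \<sigma>) * (\<Prod>k\<in>S. f (\<sigma> k) k))"
proof -
  let ?F = "\<lambda>\<sigma>. of_int (sign \<sigma>) * (\<Prod>k\<in>S. f (\<sigma> k) (\<pi> k)) :: 'a"
  have "sum ?F {\<sigma>. \<sigma> permutes S} = sum (\<lambda>\<sigma>. ?F (\<sigma> \<circ> \<pi>)) {\<sigma>. \<sigma> permutes S}"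
    by (rule sum_permutations_compose_right[OF pp])
  also have "\<dots> = sum (\<lambda>\<sigma>. of_int (sign \<pi>) * (of_int (sign \<sigma>) * (\<Prod>k\<in>S. f (\<sigma> k) k))) {\<sigma>. \<sigma> permutes S}"
  proof (rule sum.cong, simp)
    fix \<sigma> assume "\<sigma> \<in> {\<sigma>. \<sigma> permutes S}"
    hence sp: "\<sigma> permutes S" by simp
    have s1: "sign (\<sigma> \<circ> \<pi>) = sign \<sigma> * sign \<pi>"
      by (rule sign_compose[OF permutes_imp_permutation[OF fin sp] permutes_imp_permutation[OF fin pp]])
    have "(\<Prod>k\<in>S. f (\<sigma> k) k) = (\<Prod>k\<in>S. f (\<sigma> (\<pi> k)) (\<pi> k))"
      using prod.permute[OF pp, of "\<lambda>k. f (\<sigma> k) k"] unfolding comp_def .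
    thus "?F (\<sigma> \<circ> \<pi>) = of_int (sign \<pi>) * (of_int (sign \<sigma>) * (\<Prod>k\<in>S. f (\<sigma> k) k))"
      using s1 by (simp add: ac_simps)
  qed
  also have "\<dots> = of_int (sign \<pi>) * (\<Sum>\<sigma> | \<sigma> permutes S. of_int (sign \<sigma>) * (\<Prod>k\<in>S. f (\<sigma> k) k))"
    by (simp add: sum_distrib_left)
  finally show ?thesis .
qed

lemma det_transp:
  fixes M :: "'b \<Rightarrow> 'b \<Rightarrow> 'a::comm_ring_1"
  assumes fin: "finite S"
  shows "(\<Sum>p | p permutes S. of_int (sign p) * (\<Prod>i\<in>S. M i (p i)))
       = (\<Sum>\<sigma> | \<sigma> permutes S. of_int (sign \<sigma>) * (\<Prod>k\<in>S. M (\<sigma> k) k))"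
proof -
  let ?F = "\<lambda>p. of_int (sign p) * (\<Prod>i\<in>S. M i (p i)) :: 'a"
  have "sum ?F {p. p permutes S} = sum (\<lambda>p. ?F (inv p)) {p. p permutes S}"
    by (rule sum_permutations_inverse)
  also have "\<dots> = (\<Sum>\<sigma> | \<sigma> permutes S. of_int (sign \<sigma>) * (\<Prod>k\<in>S. M (\<sigma> k) k))"
  proof (rule sum.cong, simp)
    fix p assume "p \<in> {p. p permutes S}"
    hence pp: "p permutes S" by simp
    have "(\<Prod>i\<in>S. M i (inv p i)) = (\<Prod>i\<in>S. M (p i) (inv p (p i)))"
      using prod.permute[OF pp, of "\<lambda>i. M i (inv p i)"] unfolding comp_def .
    also have "\<dots> = (\<Prod>i\<in>S. M (p i) i)" using permutes_inverses(2)[OF pp] by simp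
    finally show "?F (inv p) = of_int (sign p) * (\<Prod>k\<in>S. M (p k) k)"
      using sign_inverse[OF permutes_imp_permutation[OF fin pp]] by simp
  qed
  finally show ?thesis .
qed

definition shiftp :: "nat \<Rightarrow> (nat \<Rightarrow> nat) \<Rightarrow> nat \<Rightarrow> nat" where
  "shiftp c p k = (if c \<le> k then p (k - c) + c else k)"

lemma shiftp_id: "shiftp c id = id"
  by (auto simp: shiftp_def fun_eq_iff)

lemma shiftp_comp: "shiftp c (p \<circ> q) = shiftp c p \<circ> shiftp c q"
  by (auto simp: shiftp_def fun_eq_iff)

lemma shiftp_transpose: "shiftp c (transpose a b) = transpose (a + c) (b + c)"
  by (auto simp: shiftp_def fun_eq_iff transpose_def)

lemma swapidseq_shiftp: "swapidseq n p \<Longrightarrow> swapidseq n (shiftp c p)"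
proof (induction rule: swapidseq.induct)
  case id
  then show ?case using shiftp_id by (metis swapidseq.id)
next
  case (comp_Suc n p a b)
  have "shiftp c (transpose a b \<circ> p) = transpose (a + c) (b + c) \<circ> shiftp c p"
    by (simp add: shiftp_comp shiftp_transpose)
  moreover have "swapidseq (Suc n) (transpose (a + c) (b + c) \<circ> shiftp c p)"
    by (rule swapidseq.comp_Suc[OF comp_Suc.IH]) (use comp_Suc.hyps in simp)
  ultimately show ?case by (simp only:)
qed

lemma sign_shiftp:
  assumes "permutation p" shows "sign (shiftp c p) = sign p"
proof -
  from assms obtain n where n: "swapidseq n p" unfolding permutation_def by blast
  have "evenperm p = even n" by (rule evenperm_unique[OF n refl])
  moreover have "evenperm (shiftp c p) = even n" by (rule evenperm_unique[OF swapidseq_shiftp[OF n] refl])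
  ultimately show ?thesis by (simp add: sign_def)
qed

lemma shiftp_permutes:
  assumes "\<psi> permutes {1..s}"
  shows "shiftp c \<psi> permutes {c+1..c+s}"
proof -
  have b: "bij (shiftp c \<psi>)"
  proof (rule o_bij[of "shiftp c (inv \<psi>)"])
    show "shiftp c (inv \<psi>) \<circ> shiftp c \<psi> = id"
      by (simp add: shiftp_comp[symmetric] permutes_inv_o[OF assms] shiftp_id)
    show "shiftp c \<psi> \<circ> shiftp c (inv \<psi>) = id"
      by (simp add: shiftp_comp[symmetric] permutes_inv_o[OF assms] shiftp_id)
  qed
  have fx: "shiftp c \<psi> x = x" if "x \<notin> {c+1..c+s}" for x
  proof (cases "c \<le> x")
    case True
    hence "x - c \<notin> {1..s}" using that by auto
    hence "\<psi> (x - c) = x - c" using permutes_not_in[OF assms] by blast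
    thus ?thesis using True by (simp add: shiftp_def)
  qed (simp add: shiftp_def)
  have "\<forall>y. \<exists>!x. shiftp c \<psi> x = y" using b unfolding bij_iff by blast
  moreover have "\<forall>x. x \<notin> {c+1..c+s} \<longrightarrow> shiftp c \<psi> x = x" using fx by blast
  ultimately show ?thesis unfolding permutes_def by (intro conjI)
qed


lemma prod_split_shift:
  fixes f :: "nat \<Rightarrow> 'a::comm_monoid_mult"
  shows "(\<Prod>k\<in>{1..c+d}. f k) = (\<Prod>k\<in>{1..c}. f k) * (\<Prod>u\<in>{1..d}. f (c + u))"
proof -
  have "(\<Prod>k\<in>{1..c+d}. f k) = (\<Prod>k\<in>{1..c}. f k) * (\<Prod>k\<in>{c+1..c+d}. f k)"
    by (rule prod.ub_add_nat) simp
  also have "(\<Prod>k\<in>{c+1..c+d}. f k) = (\<Prod>u\<in>{1..d}. f (c + u))"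
    using prod.shift_bounds_cl_nat_ivl[of f 1 c d] by (simp add: ac_simps)
  finally show ?thesis .
qed

lemma main_identity:
  fixes a b :: "nat \<Rightarrow> nat \<Rightarrow> 'a::comm_ring_1" and l m n s r :: nat
  assumes l1: "1 \<le> l" and ln: "l \<le> n" and m1: "1 \<le> m" and mn: "m \<le> n"
    and sdef: "s + n = l + m" and rdef: "r + l = n + 1" and two: "\<exists>y::'a. 2*y = 1"
  shows "(\<Sum>\<sigma> | \<sigma> permutes {1..m}. \<Sum>\<tau> | \<tau> permutes {1..l}.
           of_int (sign \<sigma>) * of_int (sign \<tau>)
           * (\<Prod>k\<in>{1..r-1}. a (\<sigma> k) k)
           * (\<Prod>t\<in>{1..l-s}. b (m + t) (\<tau> (s + t)))
           * (\<Prod>u\<in>{1..s}. mat_prod_fn n a b (\<sigma> (r - 1 + u)) (\<tau> u)))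
       = of_nat (fact s) * (det_fn m a * det_fn l (\<lambda>i j. b (r - 1 + i) j))"
proof -
  have r1: "1 \<le> r" using rdef ln by simp
  have mrs: "m = (r - 1) + s" using sdef rdef ln by simp
  have lsl: "l = s + (l - s)" using sdef mn by simp
  define P where "P = PiE {1..s} (\<lambda>_. {1..n::nat})"
  define colA where "colA g k = (if k < r then k else g (k - (r-1)))" for g :: "nat\<Rightarrow>nat" and k
  define rowB where "rowB g i = (if i \<le> s then g i else m + (i - s))" for g :: "nat\<Rightarrow>nat" and i
  define XA where "XA \<sigma> g = (\<Prod>k\<in>{1..m}. a (\<sigma> k) (colA g k))" for \<sigma> g
  define YB where "YB \<tau> g = (\<Prod>i\<in>{1..l}. b (rowB g i) (\<tau> i))" for \<tau> g
  define DA where "DA g = (\<Sum>\<sigma> | \<sigma> permutes {1..m}. of_int (sign \<sigma>) * XA \<sigma> g)" for g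
  define DB where "DB g = (\<Sum>\<tau> | \<tau> permutes {1..l}. of_int (sign \<tau>) * YB \<tau> g)" for g
  have finP: "finite P" unfolding P_def by (simp add: finite_PiE)
  have step1: "(\<Prod>k\<in>{1..r-1}. a (\<sigma> k) k) * (\<Prod>t\<in>{1..l-s}. b (m + t) (\<tau> (s + t)))
           * (\<Prod>u\<in>{1..s}. mat_prod_fn n a b (\<sigma> (r - 1 + u)) (\<tau> u))
        = (\<Sum>g\<in>P. XA \<sigma> g * YB \<tau> g)" for \<sigma> \<tau>
  proof -
    have "(\<Prod>u\<in>{1..s}. mat_prod_fn n a b (\<sigma> (r - 1 + u)) (\<tau> u))
        = (\<Sum>g\<in>P. \<Prod>u\<in>{1..s}. a (\<sigma> (r - 1 + u)) (g u) * b (g u) (\<tau> u))"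
      unfolding mat_prod_fn_def P_def by (rule prod_sum_PiE) auto
    also have "\<dots> = (\<Sum>g\<in>P. (\<Prod>u\<in>{1..s}. a (\<sigma> (r - 1 + u)) (g u)) * (\<Prod>u\<in>{1..s}. b (g u) (\<tau> u)))"
      by (simp add: prod.distrib)
    finally have e1: "(\<Prod>u\<in>{1..s}. mat_prod_fn n a b (\<sigma> (r - 1 + u)) (\<tau> u)) = \<dots>" .
    have xa: "(\<Prod>k\<in>{1..r-1}. a (\<sigma> k) k) * (\<Prod>u\<in>{1..s}. a (\<sigma> (r - 1 + u)) (g u)) = XA \<sigma> g" for g
    proof -
      have "XA \<sigma> g = (\<Prod>k\<in>{1..(r-1)+s}. a (\<sigma> k) (colA g k))" unfolding XA_def using mrs by simp
      also have "\<dots> = (\<Prod>k\<in>{1..r-1}. a (\<sigma> k) (colA g k)) * (\<Prod>u\<in>{1..s}. a (\<sigma> (r-1+u)) (colA g (r-1+u)))"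
        by (rule prod_split_shift)
      also have "(\<Prod>k\<in>{1..r-1}. a (\<sigma> k) (colA g k)) = (\<Prod>k\<in>{1..r-1}. a (\<sigma> k) k)"
        by (rule prod.cong) (auto simp: colA_def)
      also have "(\<Prod>u\<in>{1..s}. a (\<sigma> (r-1+u)) (colA g (r-1+u))) = (\<Prod>u\<in>{1..s}. a (\<sigma> (r-1+u)) (g u))"
        using r1 by (intro prod.cong) (auto simp: colA_def)
      finally show ?thesis by simp
    qed
    have yb: "(\<Prod>u\<in>{1..s}. b (g u) (\<tau> u)) * (\<Prod>t\<in>{1..l-s}. b (m + t) (\<tau> (s + t))) = YB \<tau> g" for g
    proof -
      have "YB \<tau> g = (\<Prod>i\<in>{1..s+(l-s)}. b (rowB g i) (\<tau> i))" unfolding YB_def using lsl by simp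
      also have "\<dots> = (\<Prod>i\<in>{1..s}. b (rowB g i) (\<tau> i)) * (\<Prod>t\<in>{1..l-s}. b (rowB g (s+t)) (\<tau> (s+t)))"
        by (rule prod_split_shift)
      also have "(\<Prod>i\<in>{1..s}. b (rowB g i) (\<tau> i)) = (\<Prod>u\<in>{1..s}. b (g u) (\<tau> u))"
        by (rule prod.cong) (auto simp: rowB_def)
      also have "(\<Prod>t\<in>{1..l-s}. b (rowB g (s+t)) (\<tau> (s+t))) = (\<Prod>t\<in>{1..l-s}. b (m + t) (\<tau> (s + t)))"
        by (intro prod.cong) (auto simp: rowB_def)
      finally show ?thesis by simp
    qed
    show ?thesis unfolding e1 sum_distrib_left
    proof (rule sum.cong[OF refl])
      fix g
      show "(\<Prod>k\<in>{1..r-1}. a (\<sigma> k) k) * (\<Prod>t\<in>{1..l-s}. b (m + t) (\<tau> (s + t))) *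
          ((\<Prod>u\<in>{1..s}. a (\<sigma> (r - 1 + u)) (g u)) * (\<Prod>u\<in>{1..s}. b (g u) (\<tau> u))) = XA \<sigma> g * YB \<tau> g"
        unfolding xa[symmetric] yb[symmetric] by (simp add: ac_simps)
    qed
  qed
  have step2: "(\<Sum>\<sigma> | \<sigma> permutes {1..m}. \<Sum>\<tau> | \<tau> permutes {1..l}.
           of_int (sign \<sigma>) * of_int (sign \<tau>)
           * (\<Prod>k\<in>{1..r-1}. a (\<sigma> k) k)
           * (\<Prod>t\<in>{1..l-s}. b (m + t) (\<tau> (s + t)))
           * (\<Prod>u\<in>{1..s}. mat_prod_fn n a b (\<sigma> (r - 1 + u)) (\<tau> u)))
       = (\<Sum>g\<in>P. DA g * DB g)"
  proof -
    have "(\<Sum>g\<in>P. DA g * DB g) = (\<Sum>g\<in>P. \<Sum>\<sigma> | \<sigma> permutes {1..m}. \<Sum>\<tau> | \<tau> permutes {1..l}.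
            (of_int (sign \<sigma>) * XA \<sigma> g) * (of_int (sign \<tau>) * YB \<tau> g))"
      unfolding DA_def DB_def by (simp add: sum_product)
    also have "\<dots> = (\<Sum>\<sigma> | \<sigma> permutes {1..m}. \<Sum>g\<in>P. \<Sum>\<tau> | \<tau> permutes {1..l}.
            (of_int (sign \<sigma>) * XA \<sigma> g) * (of_int (sign \<tau>) * YB \<tau> g))"
      by (rule sum.swap)
    also have "\<dots> = (\<Sum>\<sigma> | \<sigma> permutes {1..m}. \<Sum>\<tau> | \<tau> permutes {1..l}. \<Sum>g\<in>P.
            (of_int (sign \<sigma>) * XA \<sigma> g) * (of_int (sign \<tau>) * YB \<tau> g))"
      by (rule sum.cong[OF refl], rule sum.swap)
    also have "\<dots> = (\<Sum>\<sigma> | \<sigma> permutes {1..m}. \<Sum>\<tau> | \<tau> permutes {1..l}.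
           of_int (sign \<sigma>) * of_int (sign \<tau>)
           * ((\<Prod>k\<in>{1..r-1}. a (\<sigma> k) k)
           * (\<Prod>t\<in>{1..l-s}. b (m + t) (\<tau> (s + t)))
           * (\<Prod>u\<in>{1..s}. mat_prod_fn n a b (\<sigma> (r - 1 + u)) (\<tau> u))))"
      unfolding step1 sum_distrib_left by (intro sum.cong refl) (simp add: ac_simps)
    finally show ?thesis by (simp add: ac_simps)
  qed
  define G where "G = (\<lambda>\<psi>. restrict (\<lambda>u. \<psi> u + (r-1)) {1..s}) ` {\<psi>. \<psi> permutes {1..s}}"
  have GP: "G \<subseteq> P"
  proof
    fix g assume "g \<in> G"
    then obtain \<psi> where ps: "\<psi> permutes {1..s}" and g: "g = restrict (\<lambda>u. \<psi> u + (r-1)) {1..s}"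
      unfolding G_def by blast
    have "\<psi> u + (r-1) \<in> {1..n}" if "u \<in> {1..s}" for u
    proof -
      have "\<psi> u \<in> {1..s}" using permutes_in_image[OF ps] that by blast
      thus ?thesis using mrs mn by auto
    qed
    thus "g \<in> P" unfolding P_def g by auto
  qed
  have step3: "DA g * DB g = 0" if gP: "g \<in> P" and gG: "g \<notin> G" for g
  proof (rule ccontr)
    assume nz: "DA g * DB g \<noteq> 0"
    hence nA: "DA g \<noteq> 0" and nB: "DB g \<noteq> 0" by auto
    have injA: "inj_on (colA g) {1..m}"
    proof (rule ccontr)
      assume "\<not> inj_on (colA g) {1..m}"
      then obtain i j where "i \<in> {1..m}" "j \<in> {1..m}" "i \<noteq> j" "colA g i = colA g j"
        unfolding inj_on_def by blast
      from alt_zero[OF _ two this, of a] have "DA g = 0" unfolding DA_def XA_def by simp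
      thus False using nA by simp
    qed
    have injB: "inj_on (rowB g) {1..l}"
    proof (rule ccontr)
      assume "\<not> inj_on (rowB g) {1..l}"
      then obtain i j where "i \<in> {1..l}" "j \<in> {1..l}" "i \<noteq> j" "rowB g i = rowB g j"
        unfolding inj_on_def by blast
      from alt_zero[OF _ two this, of "\<lambda>x y. b y x"] have "DB g = 0" unfolding DB_def YB_def by simp
      thus False using nB by simp
    qed
    have grange: "g u \<in> {r..m}" if u: "u \<in> {1..s}" for u
    proof -
      have gu: "g u \<in> {1..n}" using gP u unfolding P_def by auto
      have "r \<le> g u"
      proof (rule ccontr)
        assume "\<not> r \<le> g u"
        hence "g u \<in> {1..m}" "colA g (g u) = g u" using gu mrs by (auto simp: colA_def)
        moreover have "r - 1 + u \<in> {1..m}" "colA g (r - 1 + u) = g u" using u mrs r1 by (auto simp: colA_def)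
        moreover have "r - 1 + u \<noteq> g u" using \<open>\<not> r \<le> g u\<close> u by auto
        ultimately show False using inj_onD[OF injA, of "g u" "r - 1 + u"] by simp
      qed
      moreover have "g u \<le> m"
      proof (rule ccontr)
        assume gm: "\<not> g u \<le> m"
        define t where "t = g u - m"
        have "s + t \<in> {1..l}" "rowB g (s + t) = g u" using gm gu sdef unfolding t_def rowB_def by auto
        moreover have "u \<in> {1..l}" "rowB g u = g u" using u lsl unfolding rowB_def by auto
        moreover have "s + t \<noteq> u" using u gm unfolding t_def by auto
        ultimately show False using inj_onD[OF injB, of "s + t" u] by simp
      qed
      ultimately show ?thesis by simp
    qed
    have injg: "inj_on g {1..s}"
    proof -
      have "{1..s} \<subseteq> {1..l}" using lsl by auto
      hence "inj_on (rowB g) {1..s}" using injB inj_on_subset by blast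
      show ?thesis
      proof (rule inj_onI)
        fix x y assume x: "x \<in> {1..s}" and y: "y \<in> {1..s}" and e: "g x = g y"
        have "rowB g x = rowB g y" using x y e by (simp add: rowB_def)
        thus "x = y" using inj_onD[OF \<open>inj_on (rowB g) {1..s}\<close> _ x y] by blast
      qed
    qed
    define \<psi> where "\<psi> u = (if u \<in> {1..s} then g u - (r-1) else u)" for u
    have im: "\<psi> ` {1..s} \<subseteq> {1..s}"
    proof (rule image_subsetI)
      fix u assume u: "u \<in> {1..s}"
      have "g u \<in> {r..m}" by (rule grange[OF u])
      thus "\<psi> u \<in> {1..s}" using u mrs r1 unfolding \<psi>_def by auto
    qed
    have injp: "inj_on \<psi> {1..s}"
      unfolding inj_on_def
    proof (intro ballI impI)
      fix x y assume xy: "x \<in> {1..s}" "y \<in> {1..s}" "\<psi> x = \<psi> y"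
      hence "g x - (r-1) = g y - (r-1)" unfolding \<psi>_def by simp
      hence "g x = g y" using grange[OF xy(1)] grange[OF xy(2)] r1 by (simp, arith)
      thus "x = y" using injg xy unfolding inj_on_def by blast
    qed
    have ps: "\<psi> permutes {1..s}"
    proof (rule bij_imp_permutes)
      show "bij_betw \<psi> {1..s} {1..s}" unfolding bij_betw_def
        using injp endo_inj_surj[OF _ im injp] by simp
      show "\<psi> x = x" if "x \<notin> {1..s}" for x using that unfolding \<psi>_def by auto
    qed
    have "g = restrict (\<lambda>u. \<psi> u + (r-1)) {1..s}"
    proof
      fix u show "g u = restrict (\<lambda>u. \<psi> u + (r-1)) {1..s} u"
      proof (cases "u \<in> {1..s}")
        case True thus ?thesis using grange[OF True] r1 unfolding \<psi>_def by simp
      next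
        case False thus ?thesis using PiE_arb[of g] gP unfolding P_def by auto
      qed
    qed
    hence "g \<in> G" unfolding G_def using ps by blast
    thus False using gG by simp
  qed
  have step4: "(\<Sum>g\<in>P. DA g * DB g) = (\<Sum>\<psi> | \<psi> permutes {1..s}.
        DA (restrict (\<lambda>u. \<psi> u + (r-1)) {1..s}) * DB (restrict (\<lambda>u. \<psi> u + (r-1)) {1..s}))"
  proof -
    have "(\<Sum>g\<in>P. DA g * DB g) = (\<Sum>g\<in>G. DA g * DB g)"
      by (rule sum.mono_neutral_right[OF finP GP]) (use step3 in blast)
    also have "\<dots> = (\<Sum>\<psi> | \<psi> permutes {1..s}.
        DA (restrict (\<lambda>u. \<psi> u + (r-1)) {1..s}) * DB (restrict (\<lambda>u. \<psi> u + (r-1)) {1..s}))"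
      unfolding G_def
    proof (subst sum.reindex)
      show "inj_on (\<lambda>\<psi>. restrict (\<lambda>u. \<psi> u + (r-1)) {1..s}) {\<psi>. \<psi> permutes {1..s}}"
      proof (rule inj_onI)
        fix p q assume p: "p \<in> {\<psi>. \<psi> permutes {1..s}}" and q: "q \<in> {\<psi>. \<psi> permutes {1..s}}"
          and e: "restrict (\<lambda>u. p u + (r-1)) {1..s} = restrict (\<lambda>u. q u + (r-1)) {1..s}"
        show "p = q"
        proof
          fix u show "p u = q u"
          proof (cases "u \<in> {1..s}")
            case True thus ?thesis using fun_cong[OF e, of u] by simp
          next
            case False thus ?thesis using permutes_not_in[of p "{1..s}" u] permutes_not_in[of q "{1..s}" u] p q by simp
          qed
        qed
      qed
    qed (simp add: o_def)
    finally show ?thesis .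
  qed
  have step5: "DA (restrict (\<lambda>u. \<psi> u + (r-1)) {1..s}) * DB (restrict (\<lambda>u. \<psi> u + (r-1)) {1..s})
      = det_fn m a * det_fn l (\<lambda>i j. b (r - 1 + i) j)" if ps: "\<psi> permutes {1..s}" for \<psi>
  proof -
    define g where "g = restrict (\<lambda>u. \<psi> u + (r-1)) {1..s}"
    have pin: "\<psi> u \<in> {1..s}" if "u \<in> {1..s}" for u using permutes_in_image[OF ps] that by blast
    have pout: "\<psi> u = u" if "u \<notin> {1..s}" for u using permutes_not_in[OF ps] that by blast
    have permp: "permutation \<psi>" using permutes_imp_permutation[OF _ ps] by simp
    let ?\<pi> = "shiftp (r-1) \<psi>"
    have pip: "?\<pi> permutes {1..m}"
      using permutes_subset[OF shiftp_permutes[OF ps, of "r-1"]] mrs by auto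
    have cA: "colA g k = ?\<pi> k" if k: "k \<in> {1..m}" for k
    proof (cases "k < r")
      case True
      thus ?thesis using pout[of 0] unfolding colA_def shiftp_def by auto
    next
      case False
      hence "k - (r-1) \<in> {1..s}" using k mrs by auto
      thus ?thesis using False unfolding colA_def shiftp_def g_def by auto
    qed
    have "DA g = (\<Sum>\<sigma> | \<sigma> permutes {1..m}. of_int (sign \<sigma>) * (\<Prod>k\<in>{1..m}. a (\<sigma> k) (?\<pi> k)))"
    proof -
      have "XA \<sigma> g = (\<Prod>k\<in>{1..m}. a (\<sigma> k) (?\<pi> k))" for \<sigma>
        unfolding XA_def by (rule prod.cong[OF refl]) (simp only: cA)
      thus ?thesis unfolding DA_def by (simp only:)
    qed
    also have "\<dots> = of_int (sign ?\<pi>) * (\<Sum>\<sigma> | \<sigma> permutes {1..m}. of_int (sign \<sigma>) * (\<Prod>k\<in>{1..m}. a (\<sigma> k) k))"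
      by (rule col_perm[OF _ pip]) simp
    also have "\<dots> = of_int (sign \<psi>) * det_fn m a"
      unfolding det_fn_def sign_shiftp[OF permp] by (subst det_transp) simp_all
    finally have dA: "DA g = of_int (sign \<psi>) * det_fn m a" .
    have rB: "rowB g i = r - 1 + \<psi> i" if i: "i \<in> {1..l}" for i
    proof (cases "i \<le> s")
      case True thus ?thesis using i unfolding rowB_def g_def by auto
    next
      case False thus ?thesis using i pout[of i] mrs unfolding rowB_def g_def by auto
    qed
    have psl: "\<psi> permutes {1..l}" using permutes_subset[OF ps] lsl by auto
    have "DB g = (\<Sum>\<tau> | \<tau> permutes {1..l}. of_int (sign \<tau>) * (\<Prod>k\<in>{1..l}. (\<lambda>x y. b (r - 1 + y) x) (\<tau> k) (\<psi> k)))"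
    proof -
      have "YB \<tau> g = (\<Prod>k\<in>{1..l}. (\<lambda>x y. b (r - 1 + y) x) (\<tau> k) (\<psi> k))" for \<tau>
        unfolding YB_def by (rule prod.cong[OF refl]) (simp only: rB)
      thus ?thesis unfolding DB_def by (simp only:)
    qed
    also have "\<dots> = of_int (sign \<psi>) * (\<Sum>\<tau> | \<tau> permutes {1..l}. of_int (sign \<tau>) * (\<Prod>k\<in>{1..l}. (\<lambda>x y. b (r - 1 + y) x) (\<tau> k) k))"
      by (rule col_perm[OF _ psl]) simp
    also have "\<dots> = of_int (sign \<psi>) * det_fn l (\<lambda>i j. b (r - 1 + i) j)"
      unfolding det_fn_def by simp
    finally have dB: "DB g = of_int (sign \<psi>) * det_fn l (\<lambda>i j. b (r - 1 + i) j)" .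
    have ss: "(of_int (sign \<psi>) :: 'a) * of_int (sign \<psi>) = 1"
      by (metis of_int_1 of_int_mult sign_idempotent)
    have "of_int (sign \<psi>) * det_fn m a * (of_int (sign \<psi>) * det_fn l (\<lambda>i j. b (r - 1 + i) j))
        = ((of_int (sign \<psi>) :: 'a) * of_int (sign \<psi>)) * (det_fn m a * det_fn l (\<lambda>i j. b (r - 1 + i) j))"
      by (simp only: ac_simps)
    thus ?thesis unfolding g_def[symmetric] dA dB ss by simp
  qed
  have "(\<Sum>\<psi> | \<psi> permutes {1..s}.
        DA (restrict (\<lambda>u. \<psi> u + (r-1)) {1..s}) * DB (restrict (\<lambda>u. \<psi> u + (r-1)) {1..s}))
      = (\<Sum>\<psi> | \<psi> permutes {1..s}. det_fn m a * det_fn l (\<lambda>i j. b (r - 1 + i) j))"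
    using step5 by (intro sum.cong refl) simp
  also have "\<dots> = of_nat (fact s) * (det_fn m a * det_fn l (\<lambda>i j. b (r - 1 + i) j))"
    using card_permutations[of "{1..s}" s] by simp
  finally have fin: "(\<Sum>\<psi> | \<psi> permutes {1..s}.
        DA (restrict (\<lambda>u. \<psi> u + (r-1)) {1..s}) * DB (restrict (\<lambda>u. \<psi> u + (r-1)) {1..s}))
      = of_nat (fact s) * (det_fn m a * det_fn l (\<lambda>i j. b (r - 1 + i) j))" .
  show ?thesis by (rule trans[OF step2 trans[OF step4 fin]])
qed


theorem mainTheorem15:
  fixes l m n :: nat
    and a b :: "nat \<Rightarrow> nat \<Rightarrow> 'a::comm_ring_1"
  assumes "1 \<le> l" "l \<le> n" "1 \<le> m" "m \<le> n" "l + m > n"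
    and rat: "\<And>k::nat. k \<noteq> 0 \<Longrightarrow> \<exists>y::'a. of_nat k * y = 1"
  shows "let s = l + m - n; r = n - l + 1; c = mat_prod_fn n a b in
    \<forall>inv_fact::'a. of_nat (fact s) * inv_fact = 1 \<longrightarrow>
      det_fn m a * det_fn l (\<lambda>i j. b (r - 1 + i) j) =
      inv_fact *
        (\<Sum>\<sigma> | \<sigma> permutes {1..m}. \<Sum>\<tau> | \<tau> permutes {1..l}.
           of_int (sign \<sigma>) * of_int (sign \<tau>)
           * (\<Prod>k\<in>{1..r-1}. a (\<sigma> k) k)
           * (\<Prod>t\<in>{1..l-s}. b (m + t) (\<tau> (s + t)))
           * (\<Prod>u\<in>{1..s}. c (\<sigma> (r - 1 + u)) (\<tau> u)))"
proof -
  have two: "\<exists>y::'a. 2 * y = 1" using rat[of 2] by simp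
  have mi: "(\<Sum>\<sigma> | \<sigma> permutes {1..m}. \<Sum>\<tau> | \<tau> permutes {1..l}.
           of_int (sign \<sigma>) * of_int (sign \<tau>)
           * (\<Prod>k\<in>{1..(n - l + 1)-1}. a (\<sigma> k) k)
           * (\<Prod>t\<in>{1..l-(l + m - n)}. b (m + t) (\<tau> ((l + m - n) + t)))
           * (\<Prod>u\<in>{1..(l + m - n)}. mat_prod_fn n a b (\<sigma> ((n - l + 1) - 1 + u)) (\<tau> u)))
       = of_nat (fact (l + m - n)) * (det_fn m a * det_fn l (\<lambda>i j. b ((n - l + 1) - 1 + i) j))"
    by (rule main_identity[OF assms(1-4) _ _ two]) (use assms in simp_all)
  show ?thesis unfolding Let_def
  proof (intro allI impI)
    fix inv_fact :: 'a
    assume iv: "of_nat (fact (l + m - n)) * inv_fact = 1"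
    show "det_fn m a * det_fn l (\<lambda>i j. b ((n - l + 1) - 1 + i) j) = inv_fact *
        (\<Sum>\<sigma> | \<sigma> permutes {1..m}. \<Sum>\<tau> | \<tau> permutes {1..l}.
           of_int (sign \<sigma>) * of_int (sign \<tau>)
           * (\<Prod>k\<in>{1..(n - l + 1)-1}. a (\<sigma> k) k)
           * (\<Prod>t\<in>{1..l-(l + m - n)}. b (m + t) (\<tau> ((l + m - n) + t)))
           * (\<Prod>u\<in>{1..(l + m - n)}. mat_prod_fn n a b (\<sigma> ((n - l + 1) - 1 + u)) (\<tau> u)))"
      unfolding mi using iv by (simp add: mult.assoc[symmetric] mult.commute[of inv_fact])
  qed
qed

end
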